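(* The following randomized mechanism for a multi-unit auction with $m$ identical items and bidder set $N$ is universally obviously strategy-proof. With probability $1/2$, bundle all $m$ items together and run an ascending-price auction on the grand bundle. With the remaining probability $1/2$: place each bidder independently in a set $S$ with probability $1/2$ and in a set $U$ otherwise; bidders in $S$ receive nothing, pay nothing, and report their valuations; compute the optimal welfare $O$ achievable by allocating the $m$ items among the bidders of $S$ only; then iterate over the bidders of $U$ in an arbitrary order, and let each purchase her preferred number of the remaining items at a price of $O/(10m)$ per item.
   Context: Each bidder $i$ has a private valuation $v_i:\{0,1,\dots,m\}\to\mathbb{R}_{\ge0}$ from a known domain, with quasi-linear utility. In the ascending-price auction on the grand bundle, a common price rises and bidders drop out when it becomes too high; the last remaining bidder wins all items at the current price, and others get nothing and pay nothing. A deterministic mechanism is a rooted tree: each internal node is assigned to one bidder, who sends one of the messages labeling the outgoing edges; each leaf is labeled with an allocation and payments. A behavior $B_i$ specifies a message at every node of bidder $i$; a profile $B$ determines a path $\mathrm{Path}(B)$ with allocation $f_i(B)$ and payment $p_i(B)$ for $i$. A strategy $\mathcal S_i$ maps each valuation to a behavior; it is obviously dominant if for every $v_i$, every node $u$ of $i$, every $B_{-i}$ and every profile $B'$ with $u\in\mathrm{Path}(\mathcal S_i(v_i),B_{-i})\cap\mathrm{Path}(B')$ and $B'_i$ sending at $u$ a message different from $\mathcal S_i(v_i)$'s, $v_i(f_i(\mathcal S_i(v_i),B_{-i}))-p_i(\mathcal S_i(v_i),B_{-i})\ge v_i(f_i(B'))-p_i(B')$. A randomized mechanism (distribution over deterministic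 mechanisms with strategies) is universally OSP if each mechanism in its support is OSP. *)

theory Defs
  imports "HOL-Probability.Product_PMF"
begin

text \<open>A node of a mechanism tree is either a leaf labelled with an allocation
(number of items per bidder) and payments, or an internal node assigned to a
bidder together with the set of messages labelling its outgoing edges.
Nodes are identified with their histories (the list of messages from the root).\<close>

datatype ('i, 'm) node = Leaf "'i \<Rightarrow> nat" "'i \<Rightarrow> real" | Inner 'i "'m set"

type_synonym ('i, 'm) mech = "'m list \<Rightarrow> ('i, 'm) node"

inductive in_tree :: "('i, 'm) mech \<Rightarrow> 'm list \<Rightarrow> bool" for M where
  root: "in_tree M []"
| child: "in_tree M h \<Longrightarrow> M h = Inner i A \<Longrightarrow> x \<in> A \<Longrightarrow> in_tree M (h @ [x])"

definition valid_beh :: "('i, 'm) mech \<Rightarrow> 'i \<Rightarrow> ('m list \<Rightarrow> 'm) \<Rightarrow> bool" where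
  "valid_beh M i B \<longleftrightarrow> (\<forall>h A. in_tree M h \<longrightarrow> M h = Inner i A \<longrightarrow> B h \<in> A)"

definition valid_profile :: "('i, 'm) mech \<Rightarrow> 'i set \<Rightarrow> ('i \<Rightarrow> 'm list \<Rightarrow> 'm) \<Rightarrow> bool" where
  "valid_profile M N B \<longleftrightarrow> (\<forall>j\<in>N. valid_beh M j (B j))"

primrec hist :: "('i, 'm) mech \<Rightarrow> ('i \<Rightarrow> 'm list \<Rightarrow> 'm) \<Rightarrow> nat \<Rightarrow> 'm list" where
  "hist M B 0 = []"
| "hist M B (Suc n) =
     (case M (hist M B n) of
        Leaf a p \<Rightarrow> hist M B n
      | Inner i A \<Rightarrow> hist M B n @ [B i (hist M B n)])"

definition path :: "('i, 'm) mech \<Rightarrow> ('i \<Rightarrow> 'm list \<Rightarrow> 'm) \<Rightarrow> 'm list set" where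
  "path M B = range (hist M B)"

definition is_leaf :: "('i, 'm) node \<Rightarrow> bool" where
  "is_leaf x = (case x of Leaf a p \<Rightarrow> True | Inner i A \<Rightarrow> False)"

text \<open>The leaf reached by a profile; an infinite path (possible in the ascending
auction if two bidders never drop out) is given the null outcome.\<close>
definition final_node :: "('i, 'm) mech \<Rightarrow> ('i \<Rightarrow> 'm list \<Rightarrow> 'm) \<Rightarrow> ('i, 'm) node" where
  "final_node M B =
     (if \<exists>n. is_leaf (M (hist M B n))
      then M (hist M B (LEAST n. is_leaf (M (hist M B n))))
      else Leaf (\<lambda>_. 0) (\<lambda>_. 0))"

definition alloc :: "('i, 'm) mech \<Rightarrow> ('i \<Rightarrow> 'm list \<Rightarrow> 'm) \<Rightarrow> 'i \<Rightarrow> nat" where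
  "alloc M B i = (case final_node M B of Leaf a p \<Rightarrow> a i | Inner j A \<Rightarrow> 0)"

definition pay :: "('i, 'm) mech \<Rightarrow> ('i \<Rightarrow> 'm list \<Rightarrow> 'm) \<Rightarrow> 'i \<Rightarrow> real" where
  "pay M B i = (case final_node M B of Leaf a p \<Rightarrow> p i | Inner j A \<Rightarrow> 0)"

definition utility :: "(nat \<Rightarrow> real) \<Rightarrow> ('i, 'm) mech \<Rightarrow> ('i \<Rightarrow> 'm list \<Rightarrow> 'm) \<Rightarrow> 'i \<Rightarrow> real" where
  "utility v M B i = v (alloc M B i) - pay M B i"

definition obviously_dominant ::
  "('i, 'm) mech \<Rightarrow> 'i set \<Rightarrow> 'i \<Rightarrow> (nat \<Rightarrow> real) set \<Rightarrow> ((nat \<Rightarrow> real) \<Rightarrow> 'm list \<Rightarrow> 'm) \<Rightarrow> bool" where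
  "obviously_dominant M N i Di Si \<longleftrightarrow>
     (\<forall>v\<in>Di. \<forall>u A. M u = Inner i A \<longrightarrow>
        (\<forall>B B'. (\<forall>j\<in>N - {i}. valid_beh M j (B j)) \<longrightarrow> valid_profile M N B' \<longrightarrow>
           u \<in> path M (B(i := Si v)) \<longrightarrow> u \<in> path M B' \<longrightarrow> B' i u \<noteq> Si v u \<longrightarrow>
           utility v M B' i \<le> utility v M (B(i := Si v)) i))"

definition OSP :: "('i, 'm) mech \<Rightarrow> 'i set \<Rightarrow> ('i \<Rightarrow> (nat \<Rightarrow> real) set) \<Rightarrow> bool" where
  "OSP M N D \<longleftrightarrow>
     (\<exists>S. (\<forall>i\<in>N. \<forall>v\<in>D i. valid_beh M i (S i v)) \<and>
          (\<forall>i\<in>N. obviously_dominant M N i (D i) (S i)))"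

definition universally_OSP :: "('i, 'm) mech pmf \<Rightarrow> 'i set \<Rightarrow> ('i \<Rightarrow> (nat \<Rightarrow> real) set) \<Rightarrow> bool" where
  "universally_OSP P N D \<longleftrightarrow> (\<forall>M \<in> set_pmf P. OSP M N D)"

datatype ('i, 'm, 's) snode = SLeaf "'i \<Rightarrow> nat" "'i \<Rightarrow> real" | SAsk 'i "'m set" "'m \<Rightarrow> 's"

fun run_state :: "('s \<Rightarrow> ('i, 'm, 's) snode) \<Rightarrow> 's \<Rightarrow> 'm list \<Rightarrow> 's" where
  "run_state step s [] = s"
| "run_state step s (x # xs) =
     (case step s of SLeaf a p \<Rightarrow> s | SAsk i A nxt \<Rightarrow> run_state step (nxt x) xs)"

definition mech_of :: "('s \<Rightarrow> ('i, 'm, 's) snode) \<Rightarrow> 's \<Rightarrow> ('i, 'm) mech" where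
  "mech_of step s0 h =
     (case step (run_state step s0 h) of SLeaf a p \<Rightarrow> Leaf a p | SAsk i A nxt \<Rightarrow> Inner i A)"

datatype msg = Stay | Drop | Report "nat \<Rightarrow> real" | Buy nat

text \<open>Ascending-price auction on the grand bundle of m items, price increment eps.
State: (round k with current price k*eps, bidders still to be asked this round,
bidders that accepted the current price so far).\<close>

fun asc_step :: "nat \<Rightarrow> real \<Rightarrow> nat \<times> 'i list \<times> 'i list \<Rightarrow> ('i, msg, nat \<times> 'i list \<times> 'i list) snode" where
  "asc_step m eps (k, x # rest, st) =
     SAsk x {Stay, Drop} (\<lambda>c. (k, rest, if c = Stay then st @ [x] else st))"
| "asc_step m eps (k, [], []) = SLeaf (\<lambda>_. 0) (\<lambda>_. 0)"
| "asc_step m eps (k, [], [j]) =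
     SLeaf (\<lambda>i. if i = j then m else 0) (\<lambda>i. if i = j then real k * eps else 0)"
| "asc_step m eps (k, [], j # j' # js) =
     SAsk j {Stay, Drop} (\<lambda>c. (Suc k, j' # js, if c = Stay then [j] else []))"

definition asc_mech :: "'i set \<Rightarrow> nat \<Rightarrow> real \<Rightarrow> ('i set \<Rightarrow> 'i list) \<Rightarrow> ('i, msg) mech" where
  "asc_mech N m eps ord = mech_of (asc_step m eps) (0, ord N, [])"

definition opt_welfare :: "nat \<Rightarrow> 'i set \<Rightarrow> ('i \<Rightarrow> nat \<Rightarrow> real) \<Rightarrow> real" where
  "opt_welfare m S rep =
     Max {(\<Sum>i\<in>S. rep i (a i)) | a. (\<forall>i. i \<notin> S \<longrightarrow> a i = 0) \<and> (\<Sum>i\<in>S. a i) \<le> m}"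

definition report_of :: "msg \<Rightarrow> nat \<Rightarrow> real" where
  "report_of c = (case c of Report v \<Rightarrow> v | _ \<Rightarrow> (\<lambda>_. 0))"

definition bought_of :: "msg \<Rightarrow> nat" where
  "bought_of c = (case c of Buy k \<Rightarrow> k | _ \<Rightarrow> 0)"

text \<open>Second branch for a realized sample set S (U = N - S).  State:
(S-bidders still to report, reports, U-bidders still to buy, remaining items,
numbers bought).\<close>

fun pp_step :: "nat \<Rightarrow> ('i \<Rightarrow> (nat \<Rightarrow> real) set) \<Rightarrow> 'i set \<Rightarrow>
    'i list \<times> ('i \<Rightarrow> nat \<Rightarrow> real) \<times> 'i list \<times> nat \<times> ('i \<Rightarrow> nat) \<Rightarrow>
    ('i, msg, 'i list \<times> ('i \<Rightarrow> nat \<Rightarrow> real) \<times> 'i list \<times> nat \<times> ('i \<Rightarrow> nat)) snode" where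
  "pp_step m D S (x # rs, rep, us, r, b) =
     SAsk x (Report ` D x) (\<lambda>c. (rs, rep(x := report_of c), us, r, b))"
| "pp_step m D S ([], rep, y # us, r, b) =
     SAsk y (Buy ` {0..r}) (\<lambda>c. ([], rep, us, r - bought_of c, b(y := bought_of c)))"
| "pp_step m D S ([], rep, [], r, b) =
     SLeaf b (\<lambda>i. real (b i) * (opt_welfare m S rep / (10 * real m)))"

definition pp_mech :: "'i set \<Rightarrow> nat \<Rightarrow> ('i \<Rightarrow> (nat \<Rightarrow> real) set) \<Rightarrow> ('i set \<Rightarrow> 'i list) \<Rightarrow> 'i set \<Rightarrow> ('i, msg) mech" where
  "pp_mech N m D ord S = mech_of (pp_step m D S) (ord S, (\<lambda>_ _. 0), ord (N - S), m, (\<lambda>_. 0))"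

definition rand_mech :: "'i set \<Rightarrow> nat \<Rightarrow> ('i \<Rightarrow> (nat \<Rightarrow> real) set) \<Rightarrow> real \<Rightarrow> ('i set \<Rightarrow> 'i list) \<Rightarrow> ('i, msg) mech pmf" where
  "rand_mech N m D eps ord =
     bind_pmf (bernoulli_pmf (1/2)) (\<lambda>b.
       if b then return_pmf (asc_mech N m eps ord)
       else map_pmf (\<lambda>c. pp_mech N m D ord {i\<in>N. c i}) (Pi_pmf N False (\<lambda>_. bernoulli_pmf (1/2))))"

end

theory Submission
  imports Defs
begin

definition sts :: "('s \<Rightarrow> ('i,'m,'s) snode) \<Rightarrow> 's \<Rightarrow> ('i \<Rightarrow> 'm list \<Rightarrow> 'm) \<Rightarrow> nat \<Rightarrow> 's" where
  "sts step s0 B n = run_state step s0 (hist (mech_of step s0) B n)"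

lemma run_state_snoc:
  "run_state step s (h @ [x]) = (case step (run_state step s h) of SLeaf a p \<Rightarrow> run_state step s h | SAsk j A nxt \<Rightarrow> nxt x)"
  by (induction h arbitrary: s) (auto split: snode.split)

lemma mech_of_inner: "mech_of step s0 h = Inner i A \<longleftrightarrow> (\<exists>nxt. step (run_state step s0 h) = SAsk i A nxt)"
  by (auto simp: mech_of_def split: snode.split)

lemma sts_0[simp]: "sts step s0 B 0 = s0"
  by (simp add: sts_def)

lemma hist_Suc_ask: "step (sts step s0 B n) = SAsk j A nxt \<Longrightarrow>
   hist (mech_of step s0) B (Suc n) = hist (mech_of step s0) B n @ [B j (hist (mech_of step s0) B n)]"
  by (simp add: sts_def mech_of_def)

lemma hist_Suc_leaf: "step (sts step s0 B n) = SLeaf a p \<Longrightarrow> hist (mech_of step s0) B (Suc n) = hist (mech_of step s0) B n"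
  by (simp add: sts_def mech_of_def)

lemma sts_Suc_ask: assumes "step (sts step s0 B n) = SAsk j A nxt"
  shows "sts step s0 B (Suc n) = nxt (B j (hist (mech_of step s0) B n))"
proof -
  have "sts step s0 B (Suc n) = run_state step s0 (hist (mech_of step s0) B n @ [B j (hist (mech_of step s0) B n)])"
    using hist_Suc_ask[of step s0 B n j A nxt, OF assms] by (simp add: sts_def)
  also have "\<dots> = nxt (B j (hist (mech_of step s0) B n))"
    using assms by (simp add: run_state_snoc sts_def)
  finally show ?thesis .
qed

lemma sts_Suc_leaf: "step (sts step s0 B n) = SLeaf a p \<Longrightarrow> sts step s0 B (Suc n) = sts step s0 B n"
  using hist_Suc_leaf by (metis sts_def)

lemma leaf_stable:
  assumes "step (sts step s0 B n) = SLeaf a p" "n \<le> n'"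
  shows "sts step s0 B n' = sts step s0 B n \<and> hist (mech_of step s0) B n' = hist (mech_of step s0) B n"
  using assms(2)
proof (induction n' rule: dec_induct)
  case base then show ?case by simp
next
  case (step k)
  then have "step (sts step s0 B k) = SLeaf a p" using assms(1) by simp
  then show ?case using step.IH hist_Suc_leaf sts_Suc_leaf by metis
qed

lemma final_leaf:
  assumes "step (sts step s0 B n) = SLeaf a p"
  shows "final_node (mech_of step s0) B = Leaf a p"
proof -
  let ?M = "mech_of step s0"
  have L: "?M (hist ?M B n) = Leaf a p" using assms by (simp add: mech_of_def sts_def)
  then have ex: "\<exists>n. is_leaf (?M (hist ?M B n))" by (intro exI[of _ n]) (simp add: is_leaf_def)
  define n' where "n' = (LEAST n. is_leaf (?M (hist ?M B n)))"
  have "is_leaf (?M (hist ?M B n'))" unfolding n'_def using ex by (rule LeastI_ex)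
  then obtain a' p' where L': "?M (hist ?M B n') = Leaf a' p'"
    by (auto simp: is_leaf_def split: node.splits)
  then have l': "step (sts step s0 B n') = SLeaf a' p'"
    by (auto simp: mech_of_def sts_def split: snode.splits)
  have le: "n' \<le> n" unfolding n'_def using L by (intro Least_le) (simp add: is_leaf_def)
  have "hist ?M B n = hist ?M B n'" using leaf_stable[of step s0 B n' a' p' n, OF l' le] by simp
  then have "?M (hist ?M B n') = Leaf a p" using L by simp
  moreover have "final_node ?M B = ?M (hist ?M B n')"
    using ex unfolding final_node_def n'_def by (simp only: if_True)
  ultimately show ?thesis by simp
qed

lemma final_noleaf:
  assumes "\<And>n a p. step (sts step s0 B n) \<noteq> SLeaf a p"
  shows "final_node (mech_of step s0) B = Leaf (\<lambda>_. 0) (\<lambda>_. 0)"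
proof -
  have "\<not> is_leaf (mech_of step s0 (hist (mech_of step s0) B n))" for n
    using assms[of n] by (auto simp: is_leaf_def mech_of_def sts_def split: snode.splits)
  then show ?thesis unfolding final_node_def by auto
qed

lemma util_after:
  assumes "P (sts step s0 B n0)"
    and "\<And>n. n0 \<le> n \<Longrightarrow> P (sts step s0 B n) \<Longrightarrow> P (sts step s0 B (Suc n))"
  shows "(\<exists>s a p. P s \<and> step s = SLeaf a p \<and> utility v (mech_of step s0) B i = v (a i) - p i)
     \<or> ((\<forall>n a p. step (sts step s0 B n) \<noteq> SLeaf a p) \<and> utility v (mech_of step s0) B i = v 0)"
proof -
  have all: "P (sts step s0 B n)" if "n0 \<le> n" for n
    using that
  proof (induction n rule: dec_induct)
    case base then show ?case using assms(1) by simp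
  next
    case (step k) then show ?case using assms(2) by simp
  qed
  show ?thesis
  proof (cases "\<exists>n a p. step (sts step s0 B n) = SLeaf a p")
    case True
    then obtain n a p where l: "step (sts step s0 B n) = SLeaf a p" by blast
    have "sts step s0 B (max n n0) = sts step s0 B n" using leaf_stable[of step s0 B n a p "max n n0", OF l] by simp
    then have Pn: "P (sts step s0 B n)" using all[of "max n n0"] by simp
    have U: "utility v (mech_of step s0) B i = v (a i) - p i"
      using final_leaf[of step s0 B n a p, OF l] by (simp add: utility_def alloc_def pay_def)
    show ?thesis
      apply (rule disjI1)
      apply (rule exI[of _ "sts step s0 B n"], rule exI[of _ a], rule exI[of _ p])
      using Pn l U by simp
  next
    case False
    then have nl: "\<forall>n a p. step (sts step s0 B n) \<noteq> SLeaf a p" by blast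
    then have "final_node (mech_of step s0) B = Leaf (\<lambda>_. 0) (\<lambda>_. 0)" by (intro final_noleaf) blast
    then have "utility v (mech_of step s0) B i = v 0" by (simp add: utility_def alloc_def pay_def)
    then show ?thesis using nl by (intro disjI2 conjI)
  qed
qed

lemma preserved:
  assumes "\<And>s j A nxt c. P s \<Longrightarrow> step s = SAsk j A nxt \<Longrightarrow> P (nxt c)" "P (sts step s0 B n)"
  shows "P (sts step s0 B (Suc n))"
proof (cases "step (sts step s0 B n)")
  case (SLeaf a p) then show ?thesis using assms(2) sts_Suc_leaf[of step s0 B n a p] by simp
next
  case (SAsk j A nxt) then show ?thesis using assms(1)[OF assms(2) SAsk] sts_Suc_ask[of step s0 B n j A nxt] by simp
qed

lemma inv_all:
  assumes "\<And>s j A nxt c. P s \<Longrightarrow> step s = SAsk j A nxt \<Longrightarrow> P (nxt c)" "P s0"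
  shows "P (sts step s0 B n)"
proof (induction n)
  case 0 then show ?case using assms(2) by simp
next
  case (Suc n) show ?case
    apply (rule preserved[of P step s0 B n])
     apply (rule assms(1); assumption)
    apply (rule Suc.IH)
    done
qed

lemma path_sts: "u \<in> path (mech_of step s0) B \<Longrightarrow> \<exists>n. hist (mech_of step s0) B n = u \<and> sts step s0 B n = run_state step s0 u"
  by (auto simp: path_def sts_def)

lemma term_measure:
  assumes "\<And>s j A nxt c. step s = SAsk j A nxt \<Longrightarrow> \<mu> (nxt c) < (\<mu> s :: nat)"
  shows "\<exists>n a p. step (sts step s0 B n) = SLeaf a p"
proof (rule ccontr)
  assume "\<not> ?thesis"
  then have ask: "\<exists>j A nxt. step (sts step s0 B n) = SAsk j A nxt" for n by (cases "step (sts step s0 B n)") auto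
  have dec: "\<mu> (sts step s0 B (Suc n)) < \<mu> (sts step s0 B n)" for n
  proof -
    obtain j A nxt where a: "step (sts step s0 B n) = SAsk j A nxt" using ask[of n] by blast
    show ?thesis using sts_Suc_ask[of step s0 B n j A nxt, OF a] assms[OF a] by simp
  qed
  have "\<mu> (sts step s0 B n) + n \<le> \<mu> (sts step s0 B 0)" for n
  proof (induction n)
    case 0 then show ?case by simp
  next
    case (Suc n) then show ?case using dec[of n] by simp
  qed
  from this[of "Suc (\<mu> (sts step s0 B 0))"] show False by simp
qed

lemma in_tree_hist:
  assumes "valid_profile (mech_of step s0) N B"
    and "\<And>n j A nxt. step (sts step s0 B n) = SAsk j A nxt \<Longrightarrow> j \<in> N"
  shows "in_tree (mech_of step s0) (hist (mech_of step s0) B n)"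
proof (induction n)
  case 0 then show ?case by (simp add: in_tree.root)
next
  case (Suc n)
  show ?case
  proof (cases "step (sts step s0 B n)")
    case (SLeaf a p) then show ?thesis using Suc hist_Suc_leaf[of step s0 B n a p] by simp
  next
    case (SAsk j A nxt)
    then have I: "mech_of step s0 (hist (mech_of step s0) B n) = Inner j A"
      by (simp add: mech_of_def sts_def)
    have "j \<in> N" using assms(2) SAsk by blast
    then have "B j (hist (mech_of step s0) B n) \<in> A"
      using assms(1) Suc I by (auto simp: valid_profile_def valid_beh_def)
    then show ?thesis using hist_Suc_ask[of step s0 B n j A nxt, OF SAsk] in_tree.child[OF Suc I] by simp
  qed
qed


fun ap :: "nat \<times> 'i list \<times> 'i list \<Rightarrow> nat" where
  "ap (k, x # rest, st) = k"
| "ap (k, [], st) = Suc k"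

lemma asc_ask:
  "asc_step m eps s = SAsk j A nxt \<Longrightarrow> A = {Stay, Drop} \<and>
    ((\<exists>k rest st. s = (k, j # rest, st) \<and> nxt = (\<lambda>c. (k, rest, if c = Stay then st @ [j] else st))) \<or>
     (\<exists>k j' js. s = (k, [], j # j' # js) \<and> nxt = (\<lambda>c. (Suc k, j' # js, if c = Stay then [j] else []))))"
  by (induction m eps s rule: asc_step.induct) auto

lemma asc_leaf:
  "asc_step m eps s = SLeaf a p \<Longrightarrow>
    (\<exists>k. s = (k, [], []) \<and> a = (\<lambda>_. 0) \<and> p = (\<lambda>_. 0)) \<or>
    (\<exists>k j. s = (k, [], [j]) \<and> a = (\<lambda>i. if i = j then m else 0) \<and> p = (\<lambda>i. if i = j then real k * eps else 0))"
  by (induction m eps s rule: asc_step.induct) auto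

definition asc_strat :: "nat \<Rightarrow> real \<Rightarrow> 'i set \<Rightarrow> ('i set \<Rightarrow> 'i list) \<Rightarrow> (nat \<Rightarrow> real) \<Rightarrow> msg list \<Rightarrow> msg" where
  "asc_strat m eps N ord v h =
     (if v 0 \<le> v m - real (ap (run_state (asc_step m eps) (0, ord N, []) h)) * eps then Stay else Drop)"

definition aQ :: "'i \<Rightarrow> (nat \<Rightarrow> real) \<Rightarrow> nat \<Rightarrow> real \<Rightarrow> nat \<times> 'i list \<times> 'i list \<Rightarrow> bool" where
  "aQ i v m eps s = (i \<in> set (snd (snd s)) \<longrightarrow> v 0 \<le> v m - real (fst s) * eps)"

lemma aQ_step:
  assumes "asc_step m eps s = SAsk j A nxt" "aQ i v m eps s"
    "j = i \<Longrightarrow> c = Stay \<Longrightarrow> v 0 \<le> v m - real (ap s) * eps"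
  shows "aQ i v m eps (nxt c)"
  using asc_ask[OF assms(1)] assms(2,3) by (auto simp: aQ_def split: if_splits)

lemma asc_truthful:
  "v 0 \<le> utility v (asc_mech N m eps ord) (B(i := asc_strat m eps N ord v)) i"
proof -
  let ?step = "asc_step m eps" and ?s0 = "(0::nat, ord N, [])" and ?Bt = "B(i := asc_strat m eps N ord v)"
  have step: "aQ i v m eps (sts ?step ?s0 ?Bt (Suc n))" if "aQ i v m eps (sts ?step ?s0 ?Bt n)" for n
  proof (cases "?step (sts ?step ?s0 ?Bt n)")
    case (SLeaf a p) then show ?thesis using that sts_Suc_leaf[of ?step ?s0 ?Bt n a p] by simp
  next
    case (SAsk j A nxt)
    have e: "sts ?step ?s0 ?Bt (Suc n) = nxt (?Bt j (hist (mech_of ?step ?s0) ?Bt n))"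
      by (rule sts_Suc_ask[of ?step ?s0 ?Bt n j A nxt, OF SAsk])
    show ?thesis unfolding e
    proof (rule aQ_step[OF SAsk that])
      assume "j = i" "?Bt j (hist (mech_of ?step ?s0) ?Bt n) = Stay"
      then show "v 0 \<le> v m - real (ap (sts ?step ?s0 ?Bt n)) * eps"
        by (auto simp: asc_strat_def sts_def split: if_splits)
    qed
  qed
  have "aQ i v m eps (sts ?step ?s0 ?Bt 0)" by (simp add: aQ_def)
  from util_after[of "aQ i v m eps" ?step ?s0 ?Bt 0, OF this step, where v=v and i=i]
  show ?thesis
  proof
    assume "\<exists>s a p. aQ i v m eps s \<and> ?step s = SLeaf a p \<and> utility v (mech_of ?step ?s0) ?Bt i = v (a i) - p i"
    then obtain s a p where "aQ i v m eps s" "?step s = SLeaf a p" "utility v (mech_of ?step ?s0) ?Bt i = v (a i) - p i"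
      by blast
    then show ?thesis using asc_leaf[of m eps s a p] by (auto simp: aQ_def asc_mech_def)
  next
    assume "(\<forall>n a p. ?step (sts ?step ?s0 ?Bt n) \<noteq> SLeaf a p) \<and> utility v (mech_of ?step ?s0) ?Bt i = v 0"
    then show ?thesis by (simp add: asc_mech_def)
  qed
qed

lemma asc_ap_next: "asc_step m eps s = SAsk j A nxt \<Longrightarrow> ap s \<le> fst (nxt c)"
  using asc_ask[of m eps s j A nxt] by auto

lemma asc_mono: "asc_step m eps s = SAsk j A nxt \<Longrightarrow> fst s \<le> fst (nxt c)"
  using asc_ask[of m eps s j A nxt] by auto

lemma asc_drop:
  assumes eps: "eps > 0" and h: "hist (asc_mech N m eps ord) B' n0 = u"
    and a: "asc_step m eps (run_state (asc_step m eps) (0, ord N, []) u) = SAsk i A nxt"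
    and lt: "v m - real (ap (run_state (asc_step m eps) (0, ord N, []) u)) * eps < v 0"
  shows "utility v (asc_mech N m eps ord) B' i \<le> v 0"
proof -
  let ?step = "asc_step m eps" and ?s0 = "(0::nat, ord N, [])"
  let ?su = "run_state ?step ?s0 u"
  define P where "P s = (ap ?su \<le> fst s)" for s :: "nat \<times> 'a list \<times> 'a list"
  have su: "sts ?step ?s0 B' n0 = ?su" using h by (simp add: sts_def asc_mech_def)
  then have a': "?step (sts ?step ?s0 B' n0) = SAsk i A nxt" using a by simp
  have "P (sts ?step ?s0 B' (Suc n0))"
    unfolding sts_Suc_ask[of ?step ?s0 B' n0 i A nxt, OF a'] P_def
    using asc_ap_next[OF a] .
  moreover have "P (sts ?step ?s0 B' (Suc n))" if "P (sts ?step ?s0 B' n)" for n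
  proof (rule preserved[of P ?step ?s0 B' n])
    fix s j A' nxt' c assume "P s" "?step s = SAsk j A' nxt'"
    then show "P (nxt' c)" using asc_mono[of m eps s j A' nxt' c] by (simp add: P_def)
  qed (rule that)
  ultimately have U: "(\<exists>s a p. P s \<and> ?step s = SLeaf a p \<and> utility v (mech_of ?step ?s0) B' i = v (a i) - p i)
     \<or> ((\<forall>n a p. ?step (sts ?step ?s0 B' n) \<noteq> SLeaf a p) \<and> utility v (mech_of ?step ?s0) B' i = v 0)"
    by (intro util_after[of P ?step ?s0 B' "Suc n0"]) auto
  show ?thesis
  proof (cases "\<exists>s a p. P s \<and> ?step s = SLeaf a p \<and> utility v (mech_of ?step ?s0) B' i = v (a i) - p i")
    case True
    then obtain s a p where s: "P s" "?step s = SLeaf a p" "utility v (mech_of ?step ?s0) B' i = v (a i) - p i"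
      by blast
    have "real (ap ?su) * eps \<le> real (fst s) * eps" using s(1) eps by (simp add: P_def)
    then show ?thesis using asc_leaf[OF s(2)] s(3) lt by (auto simp: asc_mech_def)
  next
    case False then have "utility v (mech_of ?step ?s0) B' i = v 0" using U by blast
    then show ?thesis by (simp add: asc_mech_def)
  qed
qed

definition aD :: "nat \<times> 'i list \<times> 'i list \<Rightarrow> bool" where
  "aD s = distinct (fst (snd s) @ snd (snd s))"

lemma aD_step: "asc_step m eps s = SAsk j A nxt \<Longrightarrow> aD s \<Longrightarrow> aD (nxt c)"
  using asc_ask[of m eps s j A nxt] by (auto simp: aD_def split: if_splits)

lemma asc_sub: "asc_step m eps s = SAsk j A nxt \<Longrightarrow>
   set (fst (snd (nxt c)) @ snd (snd (nxt c))) \<subseteq> set (fst (snd s) @ snd (snd s))"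
  using asc_ask[of m eps s j A nxt] by (auto split: if_splits)

lemma asc_gone: "asc_step m eps s = SAsk i A nxt \<Longrightarrow> aD s \<Longrightarrow> c \<noteq> Stay \<Longrightarrow>
   i \<notin> set (fst (snd (nxt c)) @ snd (snd (nxt c)))"
  using asc_ask[of m eps s i A nxt] by (auto simp: aD_def)

lemma asc_stay_dev:
  assumes dist: "distinct (ord N)" and h: "hist (asc_mech N m eps ord) B' n0 = u"
    and a: "asc_step m eps (run_state (asc_step m eps) (0, ord N, []) u) = SAsk i A nxt"
    and c: "B' i u \<noteq> Stay"
  shows "utility v (asc_mech N m eps ord) B' i \<le> v 0"
proof -
  let ?step = "asc_step m eps" and ?s0 = "(0::nat, ord N, [])"
  let ?su = "run_state ?step ?s0 u"
  define P where "P s = (i \<notin> set (fst (snd s) @ snd (snd s)))" for s :: "nat \<times> 'a list \<times> 'a list"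
  have su: "sts ?step ?s0 B' n0 = ?su" using h by (simp add: sts_def asc_mech_def)
  then have a': "?step (sts ?step ?s0 B' n0) = SAsk i A nxt" using a by simp
  have "aD (sts ?step ?s0 B' n0)"
  proof (rule inv_all[of aD ?step ?s0 B' n0])
    fix s j A nxt c assume "aD s" "?step s = SAsk j A nxt"
    then show "aD (nxt c)" using aD_step[of m eps s j A nxt c] by simp
  next
    show "aD ?s0" using dist by (simp add: aD_def)
  qed
  then have "aD ?su" using su by simp
  have "P (sts ?step ?s0 B' (Suc n0))"
    unfolding sts_Suc_ask[of ?step ?s0 B' n0 i A nxt, OF a'] P_def h[unfolded asc_mech_def]
    using asc_gone[OF a \<open>aD ?su\<close> c] .
  moreover have "P (sts ?step ?s0 B' (Suc n))" if "P (sts ?step ?s0 B' n)" for n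
  proof (rule preserved[of P ?step ?s0 B' n])
    fix s j A' nxt' c assume "P s" "?step s = SAsk j A' nxt'"
    then show "P (nxt' c)" using asc_sub[of m eps s j A' nxt' c] by (auto simp: P_def)
  qed (rule that)
  ultimately have U: "(\<exists>s a p. P s \<and> ?step s = SLeaf a p \<and> utility v (mech_of ?step ?s0) B' i = v (a i) - p i)
     \<or> ((\<forall>n a p. ?step (sts ?step ?s0 B' n) \<noteq> SLeaf a p) \<and> utility v (mech_of ?step ?s0) B' i = v 0)"
    by (intro util_after[of P ?step ?s0 B' "Suc n0"]) auto
  show ?thesis
  proof (cases "\<exists>s a p. P s \<and> ?step s = SLeaf a p \<and> utility v (mech_of ?step ?s0) B' i = v (a i) - p i")
    case True
    then obtain s a p where s: "P s" "?step s = SLeaf a p" "utility v (mech_of ?step ?s0) B' i = v (a i) - p i"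
      by blast
    then show ?thesis using asc_leaf[OF s(2)] by (auto simp: asc_mech_def P_def)
  next
    case False then have "utility v (mech_of ?step ?s0) B' i = v 0" using U by blast
    then show ?thesis by (simp add: asc_mech_def)
  qed
qed

lemma asc_OSP:
  assumes dist: "distinct (ord N)" and eps: "eps > 0"
  shows "OSP (asc_mech N m eps ord) N D"
  unfolding OSP_def
proof (intro exI[of _ "\<lambda>i. asc_strat m eps N ord"] conjI ballI)
  fix i v assume "i \<in> N" "v \<in> D i"
  show "valid_beh (asc_mech N m eps ord) i (asc_strat m eps N ord v)"
    unfolding valid_beh_def
  proof (intro allI impI)
    fix h A assume "in_tree (asc_mech N m eps ord) h" "asc_mech N m eps ord h = Inner i A"
    then obtain nxt where an: "asc_step m eps (run_state (asc_step m eps) (0, ord N, []) h) = SAsk i A nxt"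
      by (auto simp: asc_mech_def mech_of_inner)
    have "A = {Stay, Drop}" using asc_ask[OF an] by simp
    then show "asc_strat m eps N ord v h \<in> A" by (simp add: asc_strat_def)
  qed
next
  fix i assume "i \<in> N"
  show "obviously_dominant (asc_mech N m eps ord) N i (D i) (asc_strat m eps N ord)"
    unfolding obviously_dominant_def
  proof (intro ballI allI impI)
    fix v u A B B'
    assume I: "asc_mech N m eps ord u = Inner i A" and up: "u \<in> path (asc_mech N m eps ord) B'"
      and dev: "B' i u \<noteq> asc_strat m eps N ord v u"
    obtain nxt where a: "asc_step m eps (run_state (asc_step m eps) (0, ord N, []) u) = SAsk i A nxt"
      using I by (auto simp: asc_mech_def mech_of_inner)
    obtain n0 where h: "hist (asc_mech N m eps ord) B' n0 = u"
      using up by (auto simp: path_def)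
    have t: "v 0 \<le> utility v (asc_mech N m eps ord) (B(i := asc_strat m eps N ord v)) i"
      by (rule asc_truthful)
    show "utility v (asc_mech N m eps ord) B' i \<le> utility v (asc_mech N m eps ord) (B(i := asc_strat m eps N ord v)) i"
    proof (cases "asc_strat m eps N ord v u = Stay")
      case True
      then have c: "B' i u \<noteq> Stay" using dev by simp
      show ?thesis using asc_stay_dev[OF dist h a c, of v] t by linarith
    next
      case False
      then have "v m - real (ap (run_state (asc_step m eps) (0, ord N, []) u)) * eps < v 0"
        by (auto simp: asc_strat_def split: if_splits)
      then show ?thesis using asc_drop[OF eps h a, of v] t by linarith
    qed
  qed
qed


lemma ex_best: "\<exists>k\<le>(r::nat). \<forall>k'\<le>r. (f k' :: real) \<le> f k"
proof (induction r)
  case 0 then show ?case by auto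
next
  case (Suc r)
  then obtain k where k: "k \<le> r" "\<forall>k'\<le>r. f k' \<le> f k" by blast
  show ?case
  proof (cases "f k \<le> f (Suc r)")
    case True then show ?thesis using k by (intro exI[of _ "Suc r"]) (auto simp: le_Suc_eq)
  next
    case False then show ?thesis using k by (intro exI[of _ k]) (auto simp: le_Suc_eq)
  qed
qed

definition best :: "(nat \<Rightarrow> real) \<Rightarrow> nat \<Rightarrow> nat" where
  "best f r = (SOME k. k \<le> r \<and> (\<forall>k'\<le>r. f k' \<le> f k))"

lemma best: "best f r \<le> r" "k' \<le> r \<Longrightarrow> f k' \<le> f (best f r)"
  using someI_ex[OF ex_best[of r f]] unfolding best_def by auto

lemma pp_ask:
  "pp_step m D S s = SAsk j A nxt \<Longrightarrow>
    (\<exists>rs rep us r b. s = (j # rs, rep, us, r, b) \<and> A = Report ` D j \<and> nxt = (\<lambda>c. (rs, rep(j := report_of c), us, r, b))) \<or>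
    (\<exists>rep us r b. s = ([], rep, j # us, r, b) \<and> A = Buy ` {0..r} \<and> nxt = (\<lambda>c. ([], rep, us, r - bought_of c, b(j := bought_of c))))"
  by (induction m D S s rule: pp_step.induct) auto

lemma pp_leaf:
  "pp_step m D S s = SLeaf a p \<Longrightarrow>
    \<exists>rep r b. s = ([], rep, [], r, b) \<and> a = b \<and> p = (\<lambda>i. real (b i) * (opt_welfare m S rep / (10 * real m)))"
  by (induction m D S s rule: pp_step.induct) auto

definition pp_strat :: "nat \<Rightarrow> ('i \<Rightarrow> (nat \<Rightarrow> real) set) \<Rightarrow> 'i set \<Rightarrow> 'i set \<Rightarrow> ('i set \<Rightarrow> 'i list) \<Rightarrow> (nat \<Rightarrow> real) \<Rightarrow> msg list \<Rightarrow> msg" where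
  "pp_strat m D S N ord v h =
    (case run_state (pp_step m D S) (ord S, (\<lambda>_ _. 0), ord (N - S), m, (\<lambda>_. 0)) h of
      (rs, rep, us, r, b) \<Rightarrow> if rs = [] then Buy (best (\<lambda>k. v k - real k * (opt_welfare m S rep / (10 * real m))) r) else Report v)"

definition pG :: "'i set \<Rightarrow> 'i set \<Rightarrow> 'i list \<times> ('i \<Rightarrow> nat \<Rightarrow> real) \<times> 'i list \<times> nat \<times> ('i \<Rightarrow> nat) \<Rightarrow> bool" where
  "pG N S s = (case s of (rs, rep, us, r, b) \<Rightarrow> set rs \<subseteq> S \<and> set us \<subseteq> N - S \<and> distinct us \<and> (\<forall>j\<in>S. b j = 0))"

lemma pG_step: "pp_step m D S s = SAsk j A nxt \<Longrightarrow> pG N S s \<Longrightarrow> pG N S (nxt c)"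
  using pp_ask[of m D S s j A nxt] by (auto simp: pG_def)

lemma pp_meas: "pp_step m D S s = SAsk j A nxt \<Longrightarrow>
   length (fst (nxt c)) + length (fst (snd (snd (nxt c)))) < length (fst s) + length (fst (snd (snd s)))"
  using pp_ask[of m D S s j A nxt] by auto

lemma pp_OSP:
  assumes SN: "S \<subseteq> N" and oS: "set (ord S) = S" and oU: "set (ord (N - S)) = N - S" "distinct (ord (N - S))"
  shows "OSP (pp_mech N m D ord S) N D"
  unfolding OSP_def
proof (intro exI[of _ "\<lambda>i. pp_strat m D S N ord"] conjI ballI)
  let ?step = "pp_step m D S" and ?s0 = "(ord S, (\<lambda>_ _. 0), ord (N - S), m, (\<lambda>_. 0))"
  fix i v assume "i \<in> N" "v \<in> D i"
  show "valid_beh (pp_mech N m D ord S) i (pp_strat m D S N ord v)"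
    unfolding valid_beh_def
  proof (intro allI impI)
    fix h A assume "in_tree (pp_mech N m D ord S) h" "pp_mech N m D ord S h = Inner i A"
    then obtain nxt where an: "?step (run_state ?step ?s0 h) = SAsk i A nxt"
      by (auto simp: pp_mech_def mech_of_inner)
    show "pp_strat m D S N ord v h \<in> A"
      using pp_ask[OF an] \<open>v \<in> D i\<close> best(1) by (auto simp: pp_strat_def)
  qed
next
  let ?step = "pp_step m D S" and ?s0 = "(ord S, (\<lambda>_ _. 0), ord (N - S), m, (\<lambda>_. 0))"
  let ?M = "pp_mech N m D ord S"
  have G: "pG N S (sts ?step ?s0 X n)" for X n
  proof (rule inv_all[of "pG N S" ?step ?s0 X n])
    fix s j A nxt c assume "pG N S s" "?step s = SAsk j A nxt"
    then show "pG N S (nxt c)" using pG_step[of m D S s j A nxt N c] by simp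
  next
    show "pG N S ?s0" using oS oU by (simp add: pG_def)
  qed
  have trm: "\<exists>n a p. ?step (sts ?step ?s0 X n) = SLeaf a p" for X
    by (rule term_measure[where \<mu> = "\<lambda>s. length (fst s) + length (fst (snd (snd s)))"]) (rule pp_meas)
  fix i assume iN: "i \<in> N"
  show "obviously_dominant ?M N i (D i) (pp_strat m D S N ord)"
    unfolding obviously_dominant_def
  proof (intro ballI allI impI)
    fix v u A B B'
    assume I: "?M u = Inner i A" and vB': "valid_profile ?M N B'"
      and upt: "u \<in> path ?M (B(i := pp_strat m D S N ord v))"
      and up: "u \<in> path ?M B'"
      and dev: "B' i u \<noteq> pp_strat m D S N ord v u"
    let ?Bt = "B(i := pp_strat m D S N ord v)"
    obtain nxt where a: "?step (run_state ?step ?s0 u) = SAsk i A nxt"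
      using I by (auto simp: pp_mech_def mech_of_inner)
    show "utility v ?M B' i \<le> utility v ?M ?Bt i"
    proof (cases "i \<in> S")
      case True
      have "utility v ?M X i = v 0" for X
      proof -
        have U: "(\<exists>s a p. pG N S s \<and> ?step s = SLeaf a p \<and> utility v (mech_of ?step ?s0) X i = v (a i) - p i)
           \<or> ((\<forall>n a p. ?step (sts ?step ?s0 X n) \<noteq> SLeaf a p) \<and> utility v (mech_of ?step ?s0) X i = v 0)"
          by (rule util_after[of "pG N S" ?step ?s0 X 0]) (use G[of X 0] G in auto)
        show ?thesis
        proof (cases "\<exists>s a p. pG N S s \<and> ?step s = SLeaf a p \<and> utility v (mech_of ?step ?s0) X i = v (a i) - p i")
          case True
          then obtain s a p where s: "pG N S s" "?step s = SLeaf a p" "utility v (mech_of ?step ?s0) X i = v (a i) - p i"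
            by blast
          then show ?thesis using pp_leaf[OF s(2)] \<open>i \<in> S\<close> by (auto simp: pp_mech_def pG_def)
        next
          case False then have "utility v (mech_of ?step ?s0) X i = v 0" using U by blast
          then show ?thesis by (simp add: pp_mech_def)
        qed
      qed
      then show ?thesis by simp
    next
      case False
      obtain n0 where h: "hist ?M B' n0 = u" using up by (auto simp: path_def)
      have su: "sts ?step ?s0 B' n0 = run_state ?step ?s0 u" using h by (simp add: sts_def pp_mech_def)
      have "pG N S (run_state ?step ?s0 u)" using G[of B' n0] su by simp
      then obtain rep us r b where su_eq: "run_state ?step ?s0 u = ([], rep, i # us, r, b)"
        and A: "A = Buy ` {0..r}" and nx: "nxt = (\<lambda>c. ([], rep, us, r - bought_of c, b(i := bought_of c)))"
        and G0: "pG N S ([], rep, i # us, r, b)"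
        using pp_ask[OF a] False by (auto simp: pG_def)
      let ?f = "\<lambda>k. v k - real k * (opt_welfare m S rep / (10 * real m))"
      have util: "utility v ?M X i = ?f (bought_of (X i u))" if hX: "hist ?M X n1 = u" for X n1
      proof -
        have suX: "sts ?step ?s0 X n1 = run_state ?step ?s0 u" using hX by (simp add: sts_def pp_mech_def)
        then have aX: "?step (sts ?step ?s0 X n1) = SAsk i A nxt" using a by simp
        define k where "k = bought_of (X i u)"
        define P where "P s = (case s of (rs', rep', us', r', b') \<Rightarrow> rs' = [] \<and> rep' = rep \<and> i \<notin> set us' \<and> b' i = k)"
          for s :: "'a list \<times> ('a \<Rightarrow> nat \<Rightarrow> real) \<times> 'a list \<times> nat \<times> ('a \<Rightarrow> nat)"
        have P1: "P (sts ?step ?s0 X (Suc n1))"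
          unfolding sts_Suc_ask[of ?step ?s0 X n1 i A nxt, OF aX] hX[unfolded pp_mech_def]
          using G0 by (simp add: P_def nx k_def pG_def)
        have Pst: "P (sts ?step ?s0 X (Suc n))" if "P (sts ?step ?s0 X n)" for n
        proof (rule preserved[of P ?step ?s0 X n])
          fix s j A' nxt' c assume "P s" "?step s = SAsk j A' nxt'"
          then show "P (nxt' c)" using pp_ask[of m D S s j A' nxt'] by (auto simp: P_def)
        qed (rule that)
        have U: "(\<exists>s a p. P s \<and> ?step s = SLeaf a p \<and> utility v (mech_of ?step ?s0) X i = v (a i) - p i)
           \<or> ((\<forall>n a p. ?step (sts ?step ?s0 X n) \<noteq> SLeaf a p) \<and> utility v (mech_of ?step ?s0) X i = v 0)"
          by (rule util_after[of P ?step ?s0 X "Suc n1"]) (use P1 Pst in auto)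
        then obtain s a p where s: "P s" "?step s = SLeaf a p" "utility v (mech_of ?step ?s0) X i = v (a i) - p i"
          using trm[of X] by blast
        then show ?thesis using pp_leaf[OF s(2)] by (auto simp: pp_mech_def P_def k_def)
      qed
      have "in_tree ?M (hist ?M B' n0)"
        unfolding pp_mech_def
      proof (rule in_tree_hist[of ?step ?s0 N B' n0])
        show "valid_profile (mech_of ?step ?s0) N B'" using vB' by (simp add: pp_mech_def)
      next
        fix n j A nxt assume "?step (sts ?step ?s0 B' n) = SAsk j A nxt"
        then show "j \<in> N" using G[of B' n] pp_ask[of m D S "sts ?step ?s0 B' n" j A nxt] SN
          by (auto simp: pG_def subset_iff)
      qed
      then have "B' i u \<in> A" using vB' iN I h by (auto simp: valid_profile_def valid_beh_def)
      then obtain k' where k': "B' i u = Buy k'" "k' \<le> r" using A by auto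
      obtain n1 where h1: "hist ?M ?Bt n1 = u" using upt by (auto simp: path_def)
      have "?Bt i u = Buy (best ?f r)" using su_eq by (simp add: pp_strat_def)
      then have "utility v ?M ?Bt i = ?f (best ?f r)" using util[OF h1] by (simp add: bought_of_def)
      moreover have "utility v ?M B' i = ?f k'" using util[OF h] k' by (simp add: bought_of_def)
      ultimately show ?thesis using best(2)[OF k'(2), of ?f] by simp
    qed
  qed
qed


lemma rand_support:
  "M \<in> set_pmf (rand_mech N m D eps ord) \<Longrightarrow> M = asc_mech N m eps ord \<or> (\<exists>S. S \<subseteq> N \<and> M = pp_mech N m D ord S)"
proof -
  assume "M \<in> set_pmf (rand_mech N m D eps ord)"
  then obtain x where Mx: "M \<in> set_pmf (if x then return_pmf (asc_mech N m eps ord)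
       else map_pmf (\<lambda>c. pp_mech N m D ord {i\<in>N. c i}) (Pi_pmf N False (\<lambda>_. bernoulli_pmf (1/2))))"
    unfolding rand_mech_def by (auto simp: set_bind_pmf)
  show ?thesis
  proof (cases x)
    case False
    then obtain c where "M = pp_mech N m D ord {i\<in>N. c i}" using Mx by auto
    then show ?thesis by (intro disjI2 exI[of _ "{i\<in>N. c i}"]) auto
  qed (use Mx in auto)
qed

theorem lemma3p3:
  fixes N :: "'i set" and m :: nat and D :: "'i \<Rightarrow> (nat \<Rightarrow> real) set"
    and eps :: real and ord :: "'i set \<Rightarrow> 'i list"
  assumes "finite N"
    and "\<forall>i\<in>N. \<forall>v\<in>D i. \<forall>k\<le>m. v k \<ge> 0"
    and "eps > 0"
    and "\<forall>A\<subseteq>N. distinct (ord A) \<and> set (ord A) = A"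
  shows "universally_OSP (rand_mech N m D eps ord) N D"
  unfolding universally_OSP_def
proof
  fix M assume "M \<in> set_pmf (rand_mech N m D eps ord)"
  then consider "M = asc_mech N m eps ord" | S where "S \<subseteq> N" "M = pp_mech N m D ord S"
    using rand_support by blast
  then show "OSP M N D"
  proof cases
    case 1 then show ?thesis using asc_OSP[of ord N eps m D] assms(3,4) by simp
  next
    case (2 S)
    have "N - S \<subseteq> N" by blast
    then show ?thesis using pp_OSP[of S N ord m D] 2 assms(4) by simp
  qed
qed

end
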